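(* Let $G$ be a planar PCC graph, let $v$ be a vertex and let $\sigma$ be a face that appears in the multiset $F(v)$ with multiplicity $2$. Then $7\le|\sigma|\le 11$.
   Context: $G$ is a finite simple connected graph 2-cell embedded in the sphere. For a vertex $v$, $F(v)$ is the multiset of faces incident to $v$, one entry for each corner of $v$ (so a face touching $v$ at two corners appears twice). $|\sigma|$ is the length of the boundary walk of $\sigma$, and $K(v)=1-\frac{\deg(v)}{2}+\sum_{\sigma\in F(v)}\frac1{|\sigma|}$. A prism (resp. antiprism) of order $N$ is the planar graph with $2N$ vertices, two $N$-faces and $N$ quadrilaterals (resp. $2N$ triangles), each vertex incident to two quadrilaterals and one $N$-face (resp. three triangles and one $N$-face). A planar PCC graph is such a $G$ with $K(v)>0$, $\deg(v)\ge3$ for all $v$, not a prism or antiprism. *)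

theory Defs
  imports Complex_Main "HOL-Combinatorics.Permutations" "HOL-Combinatorics.Orbits"
          "HOL-Library.Multiset"
begin

text \<open>A 2-cell embedding of a finite connected graph in an orientable surface is encoded
  by a rotation system (combinatorial map) on the set D of darts (= directed edges):
  alpha is the fixed-point-free involution reversing a dart, rho is the rotation
  (cyclic order of the darts leaving a vertex). Vertices are the rho-orbits,
  edges the alpha-orbits and faces the orbits of phi = rho o alpha (the face boundary
  walks). The surface is the sphere iff Euler's formula V - E + F = 2 holds.\<close>

definition vertices_of :: "'d set \<Rightarrow> ('d \<Rightarrow> 'd) \<Rightarrow> 'd set set" where
  "vertices_of D rho = {orbit rho d | d. d \<in> D}"

definition edges_of :: "'d set \<Rightarrow> ('d \<Rightarrow> 'd) \<Rightarrow> 'd set set" where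
  "edges_of D alpha = {{d, alpha d} | d. d \<in> D}"

definition face_of :: "('d \<Rightarrow> 'd) \<Rightarrow> ('d \<Rightarrow> 'd) \<Rightarrow> 'd \<Rightarrow> 'd set" where
  "face_of alpha rho d = orbit (rho \<circ> alpha) d"

definition faces_of :: "'d set \<Rightarrow> ('d \<Rightarrow> 'd) \<Rightarrow> ('d \<Rightarrow> 'd) \<Rightarrow> 'd set set" where
  "faces_of D alpha rho = {face_of alpha rho d | d. d \<in> D}"

definition face_len :: "'d set \<Rightarrow> nat" where
  "face_len f = card f"

definition vdeg :: "'d set \<Rightarrow> nat" where
  "vdeg v = card v"

text \<open>The corners of v correspond bijectively to the darts leaving v; the corner
  between d and rho d lies in the face containing rho d. Hence F(v) is the multiset
  of faces of the darts at v.\<close>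
definition corner_faces :: "('d \<Rightarrow> 'd) \<Rightarrow> ('d \<Rightarrow> 'd) \<Rightarrow> 'd set \<Rightarrow> 'd set multiset" where
  "corner_faces alpha rho v = image_mset (face_of alpha rho) (mset_set v)"

definition curvature :: "('d \<Rightarrow> 'd) \<Rightarrow> ('d \<Rightarrow> 'd) \<Rightarrow> 'd set \<Rightarrow> real" where
  "curvature alpha rho v =
     1 - real (vdeg v) / 2 + (\<Sum>\<^sub># (image_mset (\<lambda>f. 1 / real (face_len f)) (corner_faces alpha rho v)))"

definition plane_map :: "'d set \<Rightarrow> ('d \<Rightarrow> 'd) \<Rightarrow> ('d \<Rightarrow> 'd) \<Rightarrow> bool" where
  "plane_map D alpha rho \<longleftrightarrow>
     finite D \<and> D \<noteq> {} \<and>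
     alpha permutes D \<and> (\<forall>d\<in>D. alpha d \<noteq> d \<and> alpha (alpha d) = d) \<and>
     rho permutes D \<and>
     (\<forall>d\<in>D. \<forall>e\<in>D. (d, e) \<in> ({(x, alpha x) | x. x \<in> D} \<union> {(x, rho x) | x. x \<in> D})\<^sup>*) \<and>
     int (card (vertices_of D rho)) - int (card (edges_of D alpha))
       + int (card (faces_of D alpha rho)) = 2"

definition simple_map :: "'d set \<Rightarrow> ('d \<Rightarrow> 'd) \<Rightarrow> ('d \<Rightarrow> 'd) \<Rightarrow> bool" where
  "simple_map D alpha rho \<longleftrightarrow>
     (\<forall>d\<in>D. alpha d \<notin> orbit rho d) \<and>
     (\<forall>d\<in>D. \<forall>e\<in>D. orbit rho d = orbit rho e \<and> orbit rho (alpha d) = orbit rho (alpha e)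
        \<longrightarrow> d = e)"

definition is_prism :: "'d set \<Rightarrow> ('d \<Rightarrow> 'd) \<Rightarrow> ('d \<Rightarrow> 'd) \<Rightarrow> nat \<Rightarrow> bool" where
  "is_prism D alpha rho N \<longleftrightarrow> N \<ge> 3 \<and>
     card (vertices_of D rho) = 2 * N \<and>
     (\<exists>A B Q. A \<noteq> B \<and> A \<notin> Q \<and> B \<notin> Q \<and>
        faces_of D alpha rho = {A, B} \<union> Q \<and>
        face_len A = N \<and> face_len B = N \<and> card Q = N \<and> (\<forall>q\<in>Q. face_len q = 4) \<and>
        (\<forall>v\<in>vertices_of D rho. \<exists>q1 q2 n. q1 \<in> Q \<and> q2 \<in> Q \<and> n \<in> {A, B} \<and>
            corner_faces alpha rho v = {#q1, q2, n#}))"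

definition is_antiprism :: "'d set \<Rightarrow> ('d \<Rightarrow> 'd) \<Rightarrow> ('d \<Rightarrow> 'd) \<Rightarrow> nat \<Rightarrow> bool" where
  "is_antiprism D alpha rho N \<longleftrightarrow> N \<ge> 3 \<and>
     card (vertices_of D rho) = 2 * N \<and>
     (\<exists>A B T. A \<noteq> B \<and> A \<notin> T \<and> B \<notin> T \<and>
        faces_of D alpha rho = {A, B} \<union> T \<and>
        face_len A = N \<and> face_len B = N \<and> card T = 2 * N \<and> (\<forall>t\<in>T. face_len t = 3) \<and>
        (\<forall>v\<in>vertices_of D rho. \<exists>t1 t2 t3 n. t1 \<in> T \<and> t2 \<in> T \<and> t3 \<in> T \<and> n \<in> {A, B} \<and>
            corner_faces alpha rho v = {#t1, t2, t3, n#}))"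

definition planar_PCC :: "'d set \<Rightarrow> ('d \<Rightarrow> 'd) \<Rightarrow> ('d \<Rightarrow> 'd) \<Rightarrow> bool" where
  "planar_PCC D alpha rho \<longleftrightarrow>
     plane_map D alpha rho \<and> simple_map D alpha rho \<and>
     (\<forall>v\<in>vertices_of D rho. curvature alpha rho v > 0 \<and> vdeg v \<ge> 3) \<and>
     (\<nexists>N. is_prism D alpha rho N) \<and> (\<nexists>N. is_antiprism D alpha rho N)"

end

theory Submission
  imports Defs
begin

locale pmap =
  fixes D :: "'d set" and alpha rho :: "'d \<Rightarrow> 'd"
  assumes fin: "finite D"
    and ap: "alpha permutes D"
    and ainv: "\<And>d. d \<in> D \<Longrightarrow> alpha (alpha d) = d"
    and rp: "rho permutes D"
    and noloop: "\<And>d. d \<in> D \<Longrightarrow> alpha d \<notin> orbit rho d"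
    and nomult: "\<And>d e. d \<in> D \<Longrightarrow> e \<in> D \<Longrightarrow> orbit rho d = orbit rho e \<Longrightarrow>
                   orbit rho (alpha d) = orbit rho (alpha e) \<Longrightarrow> d = e"
    and deg: "\<And>d. d \<in> D \<Longrightarrow> 3 \<le> card (orbit rho d)"
begin

definition "phi = rho \<circ> alpha"

lemma rperm: "permutation rho" using rp fin permutation_permutes by blast

lemma phiperm: "permutation phi"
  unfolding phi_def using rp ap fin permutation_permutes permutes_compose by blast

lemma inD_alpha: "d \<in> D \<Longrightarrow> alpha d \<in> D" using permutes_in_image[OF ap] by simp
lemma inD_rho: "d \<in> D \<Longrightarrow> rho d \<in> D" using permutes_in_image[OF rp] by simp

lemma orb_eq: "b \<in> orbit rho a \<Longrightarrow> orbit rho b = orbit rho a"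
  by (rule orbit_cyclic_eq3[OF cyclic_on_orbit'[OF rperm]])

lemma self_orb: "a \<in> orbit rho a" by (rule permutation_self_in_orbit[OF rperm])

lemma orb_rho: "orbit rho (rho a) = orbit rho a"
  by (rule permutation_orbit_step[OF rperm])

lemma K1: assumes "a \<in> D" "b \<in> orbit rho a" "phi a = b" shows False
proof -
  have "b = rho (alpha a)" using assms(3) by (simp add: phi_def)
  hence "orbit rho b = orbit rho (alpha a)" using orb_rho by simp
  moreover have "orbit rho b = orbit rho a" using orb_eq assms(2) by simp
  ultimately have "alpha a \<in> orbit rho a" using self_orb by metis
  thus False using noloop assms(1) by blast
qed

lemma K2: assumes "a \<in> D" "b \<in> orbit rho a" "phi (phi a) = b" shows False
proof -
  define t where "t = rho (alpha a)"
  have tD: "t \<in> D" unfolding t_def by (intro inD_rho inD_alpha assms(1))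
  have b: "rho (alpha t) = b" using assms(3) by (simp add: phi_def t_def)
  have 1: "orbit rho t = orbit rho (alpha a)" using orb_rho t_def by simp
  have "orbit rho (alpha t) = orbit rho b" using orb_rho b by metis
  also have "\<dots> = orbit rho a" using orb_eq assms(2) by simp
  also have "\<dots> = orbit rho (alpha (alpha a))" using ainv assms(1) by simp
  finally have 2: "orbit rho (alpha (alpha a)) = orbit rho (alpha t)" by simp
  have "alpha a = t" by (rule nomult[OF inD_alpha[OF assms(1)] tD 1[symmetric] 2])
  hence "rho (alpha a) = alpha a" using t_def by simp
  hence "orbit rho (alpha a) = {alpha a}" by (subst orbit_eq_singleton_iff)
  hence "card (orbit rho (alpha a)) = 1" by simp
  thus False using deg[OF inD_alpha[OF assms(1)]] by linarith
qed

lemma phi_pow_orbit: "x \<in> orbit phi x"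
  by (rule permutation_self_in_orbit[OF phiperm])

lemma card_face: "card (orbit phi x) = funpow_dist1 phi x x"
proof -
  have "orbit phi x = (\<lambda>n. (phi ^^ n) x) ` {0..<funpow_dist1 phi x x}"
    using orbit_conv_funpow_dist1 phi_pow_orbit by metis
  moreover have "inj_on (\<lambda>n. (phi ^^ n) x) {0..<funpow_dist1 phi x x}"
    using inj_on_funpow_dist1 phi_pow_orbit by metis
  ultimately show ?thesis by (simp add: card_image)
qed

lemma no12: assumes "a \<in> D" "b \<in> orbit rho a" "(phi ^^ k) a = b" "k = 1 \<or> k = 2"
  shows False
proof (cases "k = 1")
  case True
  hence "phi a = b" using assms(3) by simp
  thus False by (rule K1[OF assms(1,2)])
next
  case False
  hence "k = 2" using assms(4) by simp
  hence "phi (phi a) = b" using assms(3) by (simp add: numeral_2_eq_2)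
  thus False by (rule K2[OF assms(1,2)])
qed

lemma face_ge3: assumes "z \<in> D" shows "3 \<le> card (orbit phi z)"
proof -
  let ?n = "funpow_dist1 phi z z"
  have "(phi ^^ ?n) z = z" using funpow_dist1_prop phi_pow_orbit by metis
  moreover have "?n \<noteq> 1" "?n \<noteq> 2" using no12[OF assms self_orb] calculation by metis+
  ultimately show ?thesis using card_face by simp
qed

lemma two_in_face:
  assumes "x \<in> D" "y \<in> orbit rho x" "y \<in> orbit phi x" "x \<noteq> y"
  obtains k m where "(phi ^^ k) x = y" "(phi ^^ m) y = x" "k + m = card (orbit phi x)"
    "k \<ge> 3" "m \<ge> 3"
proof -
  define N where "N = funpow_dist1 phi x x"
  define K where "K = funpow_dist1 phi x y"
  have n: "(phi ^^ N) x = x" unfolding N_def using funpow_dist1_prop phi_pow_orbit by metis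
  have k: "(phi ^^ K) x = y" unfolding K_def using funpow_dist1_prop assms(3) by metis
  have "K \<le> N" unfolding K_def using funpow_dist1_le_self[OF n _ assms(3)] by (simp add: N_def)
  moreover have "K \<noteq> N" using n k assms(4) by metis
  ultimately have kn: "K < N" by simp
  have m: "(phi ^^ (N - K)) y = x"
  proof -
    have "(phi ^^ (N - K)) y = (phi ^^ (N - K)) ((phi ^^ K) x)" using k by simp
    also have "\<dots> = (phi ^^ (N - K + K)) x" by (simp only: funpow_add comp_apply)
    also have "N - K + K = N" using kn by simp
    finally show ?thesis using n by simp
  qed
  have yD: "y \<in> D" using assms(2) permutes_orbit_subset[OF rp assms(1)] by blast
  have xy: "x \<in> orbit rho y" using orb_eq[OF assms(2)] self_orb by metis
  have "K \<noteq> 1" "K \<noteq> 2" using no12[OF assms(1) assms(2) k] by metis+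
  moreover have "N - K \<noteq> 1" "N - K \<noteq> 2" using no12[OF yD xy m] by metis+
  moreover have "K > 0" unfolding K_def by simp
  moreover have "card (orbit phi x) = N" unfolding N_def by (rule card_face)
  ultimately show ?thesis using that[OF k m] kn by simp
qed

lemma not6:
  assumes "x \<in> D" "y \<in> orbit rho x" "x \<noteq> y" "card (orbit rho x) = 3"
    "(phi ^^ 3) x = y" "(phi ^^ 3) y = x"
  shows False
proof -
  have yD: "y \<in> D" using assms(2) permutes_orbit_subset[OF rp assms(1)] by blast
  have xy: "x \<in> orbit rho y" using orb_eq[OF assms(2)] self_orb by metis
  have oy: "orbit rho y = orbit rho x" using orb_eq[OF assms(2)] .
  have L: "alpha (phi (phi a)) \<in> orbit rho a - {a, b} \<and> rho (alpha (phi (phi a))) = b"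
    if "a \<in> D" "b \<in> orbit rho a" "card (orbit rho a) = 3" "(phi ^^ 3) a = b" for a b
  proof -
    let ?q = "phi (phi a)"
    have b: "rho (alpha ?q) = b" using that(4) by (simp add: phi_def numeral_3_eq_3)
    have "orbit rho (alpha ?q) = orbit rho b" using orb_rho b by metis
    also have "\<dots> = orbit rho a" using orb_eq that(2) by simp
    finally have inq: "alpha ?q \<in> orbit rho a" using self_orb by metis
    have nb: "alpha ?q \<noteq> b"
    proof
      assume "alpha ?q = b"
      hence "rho b = b" using b by simp
      hence "orbit rho b = {b}" using orbit_eq_singleton_iff by metis
      thus False using that(2,3) orb_eq by simp
    qed
    have na: "alpha ?q \<noteq> a"
    proof
      assume h: "alpha ?q = a"
      have qD: "?q \<in> D" unfolding phi_def using that(1) inD_alpha inD_rho by simp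
      have "?q = alpha a" using ainv[OF qD] h by metis
      define t where "t = phi a"
      have tD: "t \<in> D" unfolding t_def phi_def using that(1) inD_alpha inD_rho by simp
      have "phi t = alpha a" using \<open>?q = alpha a\<close> t_def by simp
      moreover have "alpha a \<in> orbit rho t"
        using orb_rho[of "alpha a"] self_orb t_def by (simp add: phi_def)
      ultimately show False using K1[OF tD] by blast
    qed
    show ?thesis using inq na nb b by simp
  qed
  have A: "alpha (phi (phi x)) \<in> orbit rho x - {x, y}" "rho (alpha (phi (phi x))) = y"
    using L[OF assms(1,2,4,5)] by auto
  have B: "alpha (phi (phi y)) \<in> orbit rho x - {y, x}" "rho (alpha (phi (phi y))) = x"
    using L[OF yD xy _ assms(6)] assms(4) oy by auto
  have "alpha (phi (phi x)) = alpha (phi (phi y))"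
  proof (rule ccontr)
    assume ne: "alpha (phi (phi x)) \<noteq> alpha (phi (phi y))"
    have fo: "finite (orbit rho x)" using assms(4) card_ge_0_finite[of "orbit rho x"] by simp
    have "{x, y, alpha (phi (phi x)), alpha (phi (phi y))} \<subseteq> orbit rho x"
      using A B self_orb assms(2) by auto
    hence "card {x, y, alpha (phi (phi x)), alpha (phi (phi y))} \<le> 3"
      using card_mono[OF fo] assms(4) by metis
    moreover have "card {x, y, alpha (phi (phi x)), alpha (phi (phi y))} = 4"
      using A B ne assms(3) by auto
    ultimately show False by simp
  qed
  thus False using A(2) B(2) assms(3) by simp
qed

end

theorem corollary2p3:
  fixes D :: "'d set" and alpha rho :: "'d \<Rightarrow> 'd"
  assumes "planar_PCC D alpha rho"
    and "v \<in> vertices_of D rho"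
    and "\<sigma> \<in> faces_of D alpha rho"
    and "count (corner_faces alpha rho v) \<sigma> = 2"
  shows "7 \<le> face_len \<sigma> \<and> face_len \<sigma> \<le> 11"
proof -
  have P: "plane_map D alpha rho" "simple_map D alpha rho"
    "\<forall>v\<in>vertices_of D rho. curvature alpha rho v > 0 \<and> vdeg v \<ge> 3"
    using assms(1) unfolding planar_PCC_def by auto
  have vv: "\<And>d. d \<in> D \<Longrightarrow> orbit rho d \<in> vertices_of D rho" unfolding vertices_of_def by blast
  interpret pmap D alpha rho
  proof
    show "finite D" "alpha permutes D" "rho permutes D" using P(1) unfolding plane_map_def by auto
    show "\<And>d. d \<in> D \<Longrightarrow> alpha (alpha d) = d" using P(1) unfolding plane_map_def by auto
    show "\<And>d. d \<in> D \<Longrightarrow> alpha d \<notin> orbit rho d" using P(2) unfolding simple_map_def by auto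
    show "\<And>d e. d \<in> D \<Longrightarrow> e \<in> D \<Longrightarrow> orbit rho d = orbit rho e \<Longrightarrow>
                   orbit rho (alpha d) = orbit rho (alpha e) \<Longrightarrow> d = e"
      using P(2) unfolding simple_map_def by blast
    show "\<And>d. d \<in> D \<Longrightarrow> 3 \<le> card (orbit rho d)" using P(3) vv unfolding vdeg_def by blast
  qed
  obtain d0 where d0: "d0 \<in> D" "v = orbit rho d0" using assms(2) unfolding vertices_of_def by blast
  have vD: "v \<subseteq> D" using d0 permutes_orbit_subset[OF rp] by blast
  have fv: "finite v" using vD fin finite_subset by blast
  have fo: "\<And>z. face_of alpha rho z = orbit phi z" unfolding face_of_def phi_def by simp
  define A where "A = {x \<in> v. \<sigma> = face_of alpha rho x}"
  have "count (corner_faces alpha rho v) \<sigma> = (\<Sum>x\<in>A. 1)"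
    unfolding corner_faces_def count_image_mset' A_def using fv
    by (intro sum.cong) auto
  hence cA: "card A = 2" using assms(4) by simp
  then obtain x y where xy: "x \<noteq> y" "A = {x, y}" by (meson card_2_iff)
  have xv: "x \<in> v" "y \<in> v" and sx: "\<sigma> = orbit phi x" and sy: "\<sigma> = orbit phi y"
    using xy unfolding A_def by (auto simp: fo)
  have xD: "x \<in> D" using xv vD by blast
  have ov: "orbit rho x = v" using orb_eq xv(1) d0(2) by simp
  have yox: "y \<in> orbit rho x" using ov xv by simp
  have yf: "y \<in> orbit phi x" using sx sy phi_pow_orbit by metis
  obtain k m where km: "(phi ^^ k) x = y" "(phi ^^ m) y = x" "k + m = card \<sigma>" "k \<ge> 3" "m \<ge> 3"
    using two_in_face[OF xD yox yf xy(1)] sx by metis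
  define s where "s = card \<sigma>"
  define d where "d = card v"
  have s6: "s \<ge> 6" using km s_def by simp
  have d3: "d \<ge> 3" using deg[OF xD] ov d_def by simp
  define g where "g = (\<lambda>z. 1 / real (face_len (face_of alpha rho z)))"
  have curv: "curvature alpha rho v = 1 - real d / 2 + (\<Sum>z\<in>v. g z)"
    unfolding curvature_def corner_faces_def d_def vdeg_def g_def
    by (simp add: sum_unfold_sum_mset image_mset.compositionality o_def)
  have Asub: "A \<subseteq> v" unfolding A_def by auto
  have "(\<Sum>z\<in>v. g z) = (\<Sum>z\<in>A. g z) + (\<Sum>z\<in>v - A. g z)"
    using sum.subset_diff[OF Asub fv, of g] by (simp add: add.commute)
  moreover have "(\<Sum>z\<in>A. g z) = 2 / real s"
  proof -
    have "(\<Sum>z\<in>A. g z) = (\<Sum>z\<in>A. 1 / real s)"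
      by (rule sum.cong) (auto simp: g_def s_def A_def face_len_def)
    thus ?thesis using cA by simp
  qed
  moreover have "(\<Sum>z\<in>v - A. g z) \<le> (\<Sum>z\<in>v - A. 1/3)"
  proof (rule sum_mono)
    fix z assume "z \<in> v - A"
    hence "z \<in> D" using vD by blast
    hence "3 \<le> card (orbit phi z)" by (rule face_ge3)
    thus "g z \<le> 1/3" unfolding g_def face_len_def fo by (simp add: field_simps)
  qed
  moreover have "card (v - A) = d - 2" using card_Diff_subset[OF _ Asub] cA fv d_def
    by (metis finite_subset Asub)
  ultimately have sumle: "(\<Sum>z\<in>v. g z) \<le> 2 / real s + (real d - 2) / 3"
    using d3 by (simp add: of_nat_diff)
  have pos: "0 < 1 - real d / 2 + 2 / real s + (real d - 2) / 3"
    using P(3) assms(2) curv sumle by force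
  have "2 / real s \<le> 1/3" using s6 by (simp add: field_simps)
  hence "real d < 4" using pos by (simp add: field_simps)
  hence d3': "d = 3" using d3 by simp
  hence "0 < 2 / real s - 1/6" using pos by simp
  hence s12: "s < 12" using s6 by (simp add: field_simps)
  have "s \<noteq> 6"
  proof
    assume "s = 6"
    hence "k = 3" "m = 3" using km s_def by auto
    thus False using not6[OF xD yox xy(1)] ov d3' d_def km by simp
  qed
  thus ?thesis using s6 s12 s_def unfolding face_len_def by simp
qed

end
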